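(* Let $q=3^m$ with $m\ge1$ and $f(x)=x^{q+2}$ on $\mathbb{F}_{q^2}$. Then $W_f(a,b)\in\{-q,0,q,2q\}$ for all $a\in\mathbb{F}_{q^2}$ and $b\in\mathbb{F}_{q^2}^*$.
   Context: The Walsh transform is $W_f(a,b)=\sum_{x\in\mathbb{F}_{q^2}}\xi_3^{\mathrm{Tr}_{\mathbb{F}_{q^2}/\mathbb{F}_3}(bf(x)-ax)}$ with $\xi_3=e^{2\pi i/3}$ and $\mathrm{Tr}_{\mathbb{F}_{q^2}/\mathbb{F}_3}$ the absolute trace. *)

theory Defs
  imports "HOL-Analysis.Analysis"
begin

text \<open>Absolute trace from a finite field of order 3^n (n = degree over F_3) to its prime
  field F_3, the latter viewed as the subset {0, 1, 2} of the field.\<close>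
definition abs_trace3 :: "nat \<Rightarrow> 'a::field \<Rightarrow> 'a" where
  "abs_trace3 n x = (\<Sum>i<n. x ^ (3 ^ i))"

definition xi3 :: complex where
  "xi3 = cis (2 * pi / 3)"

definition xi3_pow :: "'a::field \<Rightarrow> complex" where
  "xi3_pow t = xi3 ^ (THE k. k < 3 \<and> of_nat k = t)"

definition walsh3 :: "nat \<Rightarrow> ('a::{field,finite} \<Rightarrow> 'a) \<Rightarrow> 'a \<Rightarrow> 'a \<Rightarrow> complex" where
  "walsh3 n f a b = (\<Sum>x\<in>UNIV. xi3_pow (abs_trace3 n (b * f x - a * x)))"

end

theory Submission
  imports Defs "HOL-Computational_Algebra.Polynomial"
begin

lemma fermat_gen:
  fixes x :: "'a :: {field,finite}"
  shows   "x ^ card (UNIV :: 'a set) = x"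
proof (cases "x = 0")
  case False
  have "x * (\<Prod>y\<in>UNIV-{0}. x * y) = x * x ^ (card (UNIV :: 'a set) - 1) * \<Prod>(UNIV-{0})"
    by (simp add: prod.distrib mult_ac)
  also have "x * x ^ (card (UNIV :: 'a set) - 1) = x ^ Suc (card (UNIV :: 'a set) - 1)"
    by (subst power_Suc) auto
  also have "Suc (card (UNIV :: 'a set) - 1) = card (UNIV :: 'a set)"
    using finite_UNIV_card_ge_0[where ?'a = 'a] by simp
  also have "(\<Prod>y\<in>UNIV-{0}. x * y) = (\<Prod>y\<in>UNIV-{0}. y)"
    by (rule prod.reindex_bij_witness[of _ "\<lambda>y. y / x" "\<lambda>y. x * y"]) (use False in auto)
  finally show ?thesis
    by simp
qed (use finite_UNIV_card_ge_0[where ?'a = 'a] in auto)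

lemma card_of_nat_zero:
  "(of_nat CARD('a) :: 'a :: {field,finite}) = 0"
proof -
  have "(\<Sum>x\<in>(UNIV::'a set). x) = (\<Sum>x\<in>UNIV. x + 1)"
    by (rule sum.reindex_bij_witness[of _ "\<lambda>y. y + 1" "\<lambda>y. y - 1"]) auto
  also have "\<dots> = (\<Sum>x\<in>UNIV. x) + of_nat CARD('a)"
    by (simp add: sum.distrib)
  finally have "(\<Sum>x\<in>(UNIV::'a set). x) + 0 = (\<Sum>x\<in>UNIV. x) + of_nat CARD('a)" by simp
  thus ?thesis by (metis add_left_cancel)
qed

lemma xi3_cube: "xi3 ^ 3 = 1"
proof -
  have "xi3 ^ 3 = cis (real 3 * (2 * pi / 3))" unfolding xi3_def by (rule Complex.DeMoivre)
  also have "real 3 * (2 * pi / 3) = 2 * pi" by simp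
  finally show ?thesis by simp
qed

lemma xi3_ne1: "xi3 \<noteq> 1"
proof
  assume "xi3 = 1"
  hence "Re xi3 = 1" by simp
  thus False by (simp add: xi3_def cos_120)
qed

lemma xi3_sum: "1 + xi3 + xi3^2 = 0"
proof -
  have "(xi3 - 1) * (1 + xi3 + xi3^2) = xi3^3 - 1" by algebra
  hence "(xi3 - 1) * (1 + xi3 + xi3^2) = 0" using xi3_cube by simp
  thus ?thesis using xi3_ne1 by simp
qed

lemma xi3_pow_mod: "xi3 ^ (k mod 3) = xi3 ^ k"
proof -
  have "xi3 ^ k = xi3 ^ (3 * (k div 3) + k mod 3)" by simp
  also have "\<dots> = (xi3^3) ^ (k div 3) * xi3 ^ (k mod 3)" by (metis power_add power_mult)
  finally show ?thesis using xi3_cube by simp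
qed


lemma exists_nonroot:
  fixes p :: "'b::field poly"
  assumes "p \<noteq> 0" "degree p < card S"
  shows "\<exists>x\<in>S. poly p x \<noteq> 0"
proof (rule ccontr)
  assume "\<not> ?thesis"
  hence "S \<subseteq> {x. poly p x = 0}" by auto
  hence "card S \<le> card {x. poly p x = 0}" by (intro card_mono poly_roots_finite assms)
  also have "\<dots> \<le> degree p" by (rule card_poly_roots_bound[OF assms(1)])
  finally show False using assms(2) by simp
qed

context
  fixes m :: nat
  assumes cardA: "CARD('a::{field,finite}) = 3 ^ (2 * m)" and m1: "m \<ge> 1"
begin

lemma three0: "(3::'a) = 0"
proof -
  have "(of_nat (3 ^ (2*m)) :: 'a) = 0" using card_of_nat_zero[where 'a='a] cardA by simp
  hence "(3::'a) ^ (2*m) = 0" by simp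
  thus ?thesis by simp
qed

lemma two_ne0: "(2::'a) \<noteq> 0"
proof
  assume "(2::'a) = 0"
  moreover have "(3::'a) = 2 + 1" by simp
  ultimately have "(3::'a) = 1" by simp
  thus False using three0 by simp
qed

lemma frob3: "((x::'a) + y) ^ 3 = x ^ 3 + y ^ 3"
proof -
  have "(x + y) ^ 3 = x ^ 3 + y ^ 3 + 3 * (x^2*y + x*y^2)" by algebra
  thus ?thesis using three0 by simp
qed

lemma frob: "((x::'a) + y) ^ (3^k) = x ^ (3^k) + y ^ (3^k)"
proof (induction k)
  case (Suc k)
  have "(x + y) ^ (3^Suc k) = ((x+y)^(3^k))^3" by (simp add: power_mult[symmetric] mult.commute)
  also have "\<dots> = (x ^ (3^k))^3 + (y ^ (3^k))^3" using Suc frob3 by simp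
  finally show ?case by (simp add: power_mult[symmetric] mult.commute)
qed simp

lemma frob_neg: "(-(x::'a)) ^ (3^k) = - (x ^ (3^k))"
  by (simp add: power_minus_odd)

lemma frob_diff: "((x::'a) - y) ^ (3^k) = x ^ (3^k) - y ^ (3^k)"
  using frob[of x "-y" k] frob_neg[of y k] by simp

lemma frob_sum: "finite A \<Longrightarrow> (\<Sum>i\<in>A. f i :: 'a) ^ (3^k) = (\<Sum>i\<in>A. f i ^ (3^k))"
  by (induction A rule: finite_induct) (simp_all add: frob)

lemma fermat: "(x::'a) ^ (3 ^ (2*m)) = x"
  using fermat_gen[of x] cardA by simp

abbreviation tr :: "'a \<Rightarrow> 'a" where "tr x \<equiv> abs_trace3 (2*m) x"

lemma abs_trace3_add: "abs_trace3 n ((x::'a) + y) = abs_trace3 n x + abs_trace3 n y"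
  by (simp add: abs_trace3_def frob sum.distrib)

lemma abs_trace3_neg: "abs_trace3 n (-(x::'a)) = - abs_trace3 n x"
  by (simp add: abs_trace3_def frob_neg sum_negf)

lemma abs_trace3_diff: "abs_trace3 n ((x::'a) - y) = abs_trace3 n x - abs_trace3 n y"
  by (simp add: abs_trace3_def frob_diff sum_subtractf)

lemma abs_trace3_split: "abs_trace3 (a + b) (x::'a) = abs_trace3 a x + abs_trace3 b (x ^ (3 ^ a))"
proof (induction b)
  case (Suc b)
  have "(x ^ 3 ^ a) ^ 3 ^ b = x ^ 3 ^ (a + b)" by (simp add: power_mult[symmetric] power_add)
  thus ?case using Suc by (simp add: abs_trace3_def)
qed (simp add: abs_trace3_def)

lemma tr_pow3: "tr ((x::'a) ^ 3) = tr x"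
proof -
  define f where "f i = x ^ (3 ^ i)" for i
  have "tr (x ^ 3) = (\<Sum>i<2*m. f (Suc i))"
    by (simp add: abs_trace3_def f_def power_mult[symmetric] mult.commute)
  have a1: "(\<Sum>i<Suc (2*m). f i) = f 0 + (\<Sum>i<2*m. f (Suc i))" by (rule sum.lessThan_Suc_shift)
  have a2: "(\<Sum>i<Suc (2*m). f i) = (\<Sum>i<2*m. f i) + f (2*m)" by (rule sum.lessThan_Suc)
  have a3: "f (2*m) = f 0" using fermat[of x] by (simp add: f_def)
  have "tr x = (\<Sum>i<2*m. f i)" by (simp add: abs_trace3_def f_def)
  with a1 a2 a3 \<open>tr (x ^ 3) = _\<close> show ?thesis by (metis add.commute add_left_cancel)
qed

lemma tr_pow3k: "tr ((x::'a) ^ (3^k)) = tr x"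
proof (induction k)
  case (Suc k)
  have "x ^ (3 ^ Suc k) = (x ^ (3^k)) ^ 3" by (simp add: power_mult[symmetric] mult.commute)
  thus ?case using Suc tr_pow3 by simp
qed simp

lemma tr_cube: "(tr (x::'a)) ^ 3 = tr x"
proof -
  have "(tr x) ^ (3^1) = tr (x ^ 3)"
    unfolding abs_trace3_def by (subst frob_sum) (simp_all add: power_mult[symmetric] mult.commute)
  thus ?thesis using tr_pow3 by simp
qed

lemma F3_cases: "(t::'a) ^ 3 = t \<Longrightarrow> t = 0 \<or> t = 1 \<or> t = 2"
proof -
  assume h: "t ^ 3 = t"
  have "t * (t - 1) * (t - 2) = (t ^ 3 - t) + 3 * (t - t^2)" by algebra
  also have "\<dots> = 0" using h three0 by simp
  finally show ?thesis by auto
qed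

lemma of_nat_inj3: "i < 3 \<Longrightarrow> j < 3 \<Longrightarrow> (of_nat i :: 'a) = of_nat j \<Longrightarrow> i = j"
proof -
  assume "i < 3" "j < 3" and e: "(of_nat i :: 'a) = of_nat j"
  have h21: "(2::'a) \<noteq> 1"
  proof
    assume "(2::'a) = 1"
    hence "(1::'a) + 1 = 1 + 0" by simp
    hence "(1::'a) = 0" by (simp only: add_left_cancel)
    thus False by simp
  qed
  have h02: "(0::'a) \<noteq> 2" "(1::'a) \<noteq> 2" "(2::'a) \<noteq> 0" using two_ne0 h21 by auto
  have "i = 0 \<or> i = 1 \<or> i = 2" "j = 0 \<or> j = 1 \<or> j = 2" using \<open>i<3\<close> \<open>j<3\<close> by auto
  thus ?thesis using e h02 h21 by (elim disjE) simp_all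
qed

lemma of_nat_mod3: "(of_nat (k mod 3) :: 'a) = of_nat k"
proof -
  have "(of_nat k :: 'a) = of_nat (3 * (k div 3) + k mod 3)" by simp
  also have "\<dots> = 3 * of_nat (k div 3) + of_nat (k mod 3)" by (simp only: of_nat_add of_nat_mult of_nat_numeral)
  finally show ?thesis using three0 by simp
qed

lemma xi3_pow_of_nat: "xi3_pow (of_nat k :: 'a) = xi3 ^ (k mod 3)"
proof -
  have "(THE j. j < 3 \<and> (of_nat j :: 'a) = of_nat k) = k mod 3"
    by (rule the_equality) (auto simp: of_nat_mod3 intro: of_nat_inj3)
  thus ?thesis by (simp add: xi3_pow_def)
qed

definition psi :: "'a \<Rightarrow> complex" where "psi x = xi3_pow (tr x)"

lemma tr_F3: "\<exists>k<3. tr (x::'a) = of_nat k"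
proof -
  have "tr x = 0 \<or> tr x = 1 \<or> tr x = 2" using F3_cases[OF tr_cube[of x]] .
  thus ?thesis by (metis of_nat_0 of_nat_1 of_nat_numeral zero_less_numeral one_less_numeral_iff 
       numeral_less_iff semiring_norm(76) semiring_norm(77) semiring_norm(79) lessI numeral_2_eq_2 numeral_3_eq_3 less_SucI)
qed

lemma psi_add: "psi ((x::'a) + y) = psi x * psi y"
proof -
  obtain i j where ij: "tr x = of_nat i" "tr y = of_nat j" using tr_F3 by metis
  hence "tr (x + y) = of_nat (i + j)" by (simp add: abs_trace3_add)
  hence "psi (x + y) = xi3 ^ ((i + j) mod 3)" unfolding psi_def by (simp only: xi3_pow_of_nat)
  also have "\<dots> = xi3 ^ i * xi3 ^ j" by (simp add: xi3_pow_mod power_add)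
  also have "xi3 ^ i = psi x" unfolding psi_def ij xi3_pow_of_nat by (simp add: xi3_pow_mod)
  also have "xi3 ^ j = psi y" unfolding psi_def ij xi3_pow_of_nat by (simp add: xi3_pow_mod)
  finally show ?thesis .
qed

lemma tr0: "tr (0::'a) = 0"
  by (simp add: abs_trace3_def power_0_left)

lemma xi3_pow_0: "xi3_pow (0::'a) = 1"
  using xi3_pow_of_nat[of 0] by simp

lemma xi3_pow_1: "xi3_pow (1::'a) = xi3"
  using xi3_pow_of_nat[of 1] by simp

lemma xi3_pow_2: "xi3_pow (2::'a) = xi3 ^ 2"
  using xi3_pow_of_nat[of 2] by simp

lemma psi0: "psi (0::'a) = 1"
  by (simp add: psi_def tr0 xi3_pow_0)

lemma xi3_sq_ne1: "xi3 ^ 2 \<noteq> 1"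
proof
  assume "xi3^2 = 1"
  hence "xi3 ^ 3 = xi3" by (metis power_Suc2 numeral_2_eq_2 numeral_3_eq_3 mult_1)
  thus False using xi3_cube xi3_ne1 by simp
qed

lemma psi_eq1: "psi (x::'a) = 1 \<Longrightarrow> tr x = 0"
proof -
  assume h: "psi x = 1"
  obtain i where i: "i < 3" "tr x = of_nat i" using tr_F3 by metis
  hence "xi3 ^ i = 1" using h by (simp add: psi_def xi3_pow_of_nat)
  hence "i = 0" using i(1) xi3_ne1 xi3_sq_ne1 by (auto simp: less_Suc_eq numeral_3_eq_3 numeral_2_eq_2)
  thus ?thesis using i by simp
qed

lemma psi_pair: "psi (x::'a) + psi (-x) = 2 \<or> psi x + psi (-x) = -1"
proof -
  obtain i where i: "i < 3" "tr x = of_nat i" using tr_F3 by metis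
  have n: "tr (-x) = - of_nat i" using i by (simp add: abs_trace3_neg)
  have s: "xi3 + xi3^2 = -1" using xi3_sum by (simp add: eq_neg_iff_add_eq_0 algebra_simps)
  have "i = 0 \<or> i = 1 \<or> i = 2" using i(1) by auto
  moreover
  { assume "i = 0" hence ?thesis using i n by (simp add: psi_def xi3_pow_0) }
  moreover
  { assume "i = 1"
    hence a: "tr x = 1" using i by simp
    have "-(1::'a) = 2" using three0 by (simp add: eq_neg_iff_add_eq_0)
    hence "tr (-x) = 2" using n \<open>i=1\<close> by simp
    hence ?thesis using a s by (simp add: psi_def xi3_pow_1 xi3_pow_2) }
  moreover
  { assume "i = 2"
    hence a: "tr x = 2" using i by simp
    have "-(2::'a) = 1" using three0 by (simp add: eq_neg_iff_add_eq_0)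
    hence "tr (-x) = 1" using n \<open>i=2\<close> by simp
    hence ?thesis using a s by (simp add: psi_def xi3_pow_1 xi3_pow_2 add.commute) }
  ultimately show ?thesis by blast
qed


abbreviation sg :: "'a \<Rightarrow> 'a" where "sg x \<equiv> x ^ (3 ^ m)"

lemma sg_add: "sg ((x::'a) + y) = sg x + sg y" by (rule frob)
lemma sg_diff: "sg ((x::'a) - y) = sg x - sg y" by (rule frob_diff)
lemma sg_neg: "sg (-(x::'a)) = - sg x" by (rule frob_neg)
lemma sg_mult: "sg ((x::'a) * y) = sg x * sg y" by (rule power_mult_distrib)
lemma sg_div: "sg ((x::'a) / y) = sg x / sg y" by (rule power_divide)
lemma sg_one: "sg (1::'a) = 1" by simp
lemma sg_zero: "sg (0::'a) = 0" by (simp add: power_0_left)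
lemma sg_two: "sg (2::'a) = 2" using sg_add[of 1 1] by simp
lemma sg_sg: "sg (sg (x::'a)) = x"
proof -
  have "sg (sg x) = x ^ (3 ^ (2*m))" by (simp add: power_mult[symmetric] power_add[symmetric] mult_2)
  thus ?thesis using fermat by simp
qed

lemma exists_theta: "\<exists>\<theta>::'a. \<theta> \<noteq> 0 \<and> sg \<theta> = - \<theta>"
proof -
  define p :: "'a poly" where "p = monom 1 (3^m) - [:0,1:]"
  have "3 ^ m \<noteq> (1::nat)" 
  proof -
    have "(3::nat)^1 \<le> 3^m" by (rule power_increasing) (use m1 in auto)
    thus ?thesis using m1 by auto
  qed
  hence "coeff p 1 = -1" unfolding p_def by simp
  hence p0: "p \<noteq> 0" by auto
  have "degree p \<le> 3^m" unfolding p_def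
    by (intro degree_diff_le degree_monom_le) (simp add: degree_pCons_eq_if)
  also have "3^m < card (UNIV::'a set)" using cardA m1 by simp
  finally obtain x where "poly p x \<noteq> 0" using exists_nonroot[OF p0, of UNIV] by auto
  hence x: "sg x \<noteq> x" unfolding p_def by (simp add: poly_monom)
  show ?thesis
    by (rule exI[of _ "x - sg x"]) (use x in \<open>simp add: sg_diff sg_sg\<close>)
qed


lemma K_add: "sg (u::'a) = u \<Longrightarrow> sg v = v \<Longrightarrow> sg (u + v) = u + v" by (simp add: sg_add)
lemma K_mult: "sg (u::'a) = u \<Longrightarrow> sg v = v \<Longrightarrow> sg (u * v) = u * v" by (simp add: sg_mult)
lemma K_diff: "sg (u::'a) = u \<Longrightarrow> sg v = v \<Longrightarrow> sg (u - v) = u - v" by (simp add: sg_diff)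
lemma K_div: "sg (u::'a) = u \<Longrightarrow> sg v = v \<Longrightarrow> sg (u / v) = u / v" by (simp add: sg_div)
lemma K_neg: "sg (u::'a) = u \<Longrightarrow> sg (-u) = -u" by (simp add: sg_neg)

lemma bij_K:
  assumes th: "(\<theta>::'a) \<noteq> 0" "sg \<theta> = - \<theta>"
  shows "bij_betw (\<lambda>(u,v). u + v * \<theta>) ({u. sg u = u} \<times> {u. sg u = u}) UNIV"
  unfolding bij_betw_def
proof
  show "inj_on (\<lambda>(u,v). u + v * \<theta>) ({u. sg u = u} \<times> {u. sg u = u})"
  proof (rule inj_onI, clarify)
    fix u v u' v' :: 'a
    assume K: "sg u = u" "sg v = v" "sg u' = u'" "sg v' = v'" and e: "u + v * \<theta> = u' + v' * \<theta>"
    have s1: "sg (u + v * \<theta>) = u - v * \<theta>"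
      using sg_add[of u "v * \<theta>"] sg_mult[of v \<theta>] K(1,2) th(2) by simp
    have s2: "sg (u' + v' * \<theta>) = u' - v' * \<theta>"
      using sg_add[of u' "v' * \<theta>"] sg_mult[of v' \<theta>] K(3,4) th(2) by simp
    have e2: "u - v * \<theta> = u' - v' * \<theta>" using e s1 s2 by metis
    have "(u + v * \<theta>) + (u - v * \<theta>) = (u' + v' * \<theta>) + (u' - v' * \<theta>)" by (simp only: e e2)
    moreover have "(u + v * \<theta>) + (u - v * \<theta>) = 2 * u" by algebra
    moreover have "(u' + v' * \<theta>) + (u' - v' * \<theta>) = 2 * u'" by algebra
    ultimately have "2 * u = 2 * u'" by simp
    hence "u = u'" using two_ne0 by simp
    moreover have "v * \<theta> = v' * \<theta>" using e \<open>u = u'\<close> by (metis add_left_cancel)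
    hence "v = v'" using th(1) by (metis mult_cancel_right)
    ultimately show "u = u' \<and> v = v'" by simp
  qed
next
  show "(\<lambda>(u,v). u + v * \<theta>) ` ({u. sg u = u} \<times> {u. sg u = u}) = UNIV"
  proof -
    have "x \<in> (\<lambda>(u,v). u + v * \<theta>) ` ({u. sg u = u} \<times> {u. sg u = u})" for x
    proof -
      define u where "u = (x + sg x) / 2"
      define v where "v = (x - sg x) / (2 * \<theta>)"
      have "sg u = (sg x + x) / 2" unfolding u_def by (simp only: sg_div sg_add sg_two sg_sg)
      also have "\<dots> = u" unfolding u_def by (simp only: add.commute)
      finally have uK: "sg u = u" .
      have "sg v = (sg x - x) / (2 * - \<theta>)" unfolding v_def by (simp only: sg_div sg_diff sg_mult sg_two sg_sg th(2))
      also have "\<dots> = v" unfolding v_def by (simp add: minus_divide_left)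
      finally have vK: "sg v = v" .
      have "v * \<theta> = (x - sg x) / 2" unfolding v_def using th(1) two_ne0 by (simp add: field_simps)
      hence "u + v * \<theta> = (x + sg x) / 2 + (x - sg x) / 2" unfolding u_def by (simp only:)
      also have "\<dots> = ((x + sg x) + (x - sg x)) / 2" by (rule add_divide_distrib[symmetric])
      also have "(x + sg x) + (x - sg x) = 2 * x" by algebra
      also have "2 * x / 2 = x" using two_ne0 by simp
      finally have "u + v * \<theta> = x" .
      hence "x = (\<lambda>(u,v). u + v * \<theta>) (u, v)" by simp
      moreover have "(u, v) \<in> {u. sg u = u} \<times> {u. sg u = u}" using uK vK by simp
      ultimately show ?thesis by (rule image_eqI)
    qed
    thus ?thesis by auto
  qed
qed


lemma card_K: "card {u::'a. sg u = u} = 3 ^ m"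
proof -
  obtain \<theta> :: 'a where th: "\<theta> \<noteq> 0" "sg \<theta> = - \<theta>" using exists_theta by blast
  have "card ({u::'a. sg u = u} \<times> {u. sg u = u}) = card (UNIV :: 'a set)"
    by (rule bij_betw_same_card[OF bij_K[OF th]])
  moreover have "(3::nat) ^ (2 * m) = 3 ^ m * 3 ^ m" by (metis mult_2 power_add)
  ultimately have "card {u::'a. sg u = u} * card {u::'a. sg u = u} = 3 ^ m * 3 ^ m"
    using cardA by (simp add: card_cartesian_product)
  hence "card {u::'a. sg u = u} ^ Suc 1 = (3 ^ m) ^ Suc 1" by (simp add: power2_eq_square)
  thus ?thesis by (rule power_inject_base) simp_all
qed

lemma exists_w: "\<exists>w::'a. sg w = w \<and> tr w \<noteq> 0"
proof -
  define p :: "'a poly" where "p = (\<Sum>i<m. monom 1 (3 ^ i))"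
  have pe: "poly p x = abs_trace3 m x" for x
    by (simp add: p_def poly_sum poly_monom abs_trace3_def)
  have "coeff p 1 = (\<Sum>i<m. if 3 ^ i = (1::nat) then 1 else 0)"
    by (simp add: p_def coeff_sum eq_commute)
  also have "\<dots> = (\<Sum>i<m. if i = 0 then 1 else 0)"
    by (rule sum.cong) auto
  also have "\<dots> = (1::'a)" using m1 by simp
  finally have p0: "p \<noteq> 0" by auto
  have "degree p \<le> 3 ^ (m - 1)" unfolding p_def
  proof (rule degree_sum_le)
    fix i assume "i \<in> {..<m}"
    hence "(3::nat) ^ i \<le> 3 ^ (m - 1)" by (intro power_increasing) auto
    thus "degree (monom (1::'a) (3 ^ i)) \<le> 3 ^ (m - 1)" using degree_monom_le order_trans by blast
  qed simp
  also have "\<dots> < 3 ^ m" using m1 by simp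
  also have "\<dots> = card {u::'a. sg u = u}" by (simp add: card_K)
  finally obtain w where w: "w \<in> {u::'a. sg u = u}" "poly p w \<noteq> 0"
    using exists_nonroot[OF p0] by blast
  have "tr w = abs_trace3 (m + m) w" by (simp only: mult_2)
  also have "\<dots> = abs_trace3 m w + abs_trace3 m (sg w)" by (rule abs_trace3_split)
  also have "\<dots> = abs_trace3 m w + abs_trace3 m w" using w(1) by simp
  also have "\<dots> = 2 * abs_trace3 m w" by (rule mult_2[symmetric])
  finally have "tr w \<noteq> 0" using w(2) two_ne0 pe by simp
  thus ?thesis using w(1) by blast
qed


lemma sum_psi_K: "(\<Sum>u\<in>{u::'a. sg u = u}. psi u) = 0"
proof -
  obtain w :: 'a where w: "sg w = w" "tr w \<noteq> 0" using exists_w by blast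
  define S where "S = (\<Sum>u\<in>{u::'a. sg u = u}. psi u)"
  have "S = (\<Sum>u\<in>{u::'a. sg u = u}. psi (u + w))" unfolding S_def
    by (rule sum.reindex_bij_witness[of _ "\<lambda>u. u + w" "\<lambda>u. u - w"])
       (use w in \<open>auto simp: K_add K_diff\<close>)
  also have "\<dots> = psi w * S" unfolding S_def by (simp add: psi_add sum_distrib_left mult.commute)
  finally have "(1 - psi w) * S = 0" by (simp add: algebra_simps)
  moreover have "psi w \<noteq> 1" using w(2) psi_eq1 by blast
  ultimately show ?thesis unfolding S_def by simp
qed

lemma orth: assumes c: "sg (c::'a) = c"
  shows "(\<Sum>u\<in>{u::'a. sg u = u}. psi (u * c)) = (if c = 0 then of_nat (3 ^ m) else 0)"
proof (cases "c = 0")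
  case True
  thus ?thesis by (simp add: psi0 card_K)
next
  case False
  have "(\<Sum>u\<in>{u::'a. sg u = u}. psi (u * c)) = (\<Sum>u\<in>{u::'a. sg u = u}. psi u)"
    by (rule sum.reindex_bij_witness[of _ "\<lambda>u. u / c" "\<lambda>u. u * c"])
       (use c False in \<open>auto simp: K_mult K_div\<close>)
  thus ?thesis using False sum_psi_K by simp
qed


lemma sg_pow: "sg ((x::'a) ^ n) = (sg x) ^ n"
  by (simp add: power_mult[symmetric] mult.commute)

lemma tr_sg: "tr (sg (x::'a)) = tr x" by (rule tr_pow3k)

lemma key_identity:
  fixes u v \<alpha> \<beta> \<theta> :: 'a
  assumes K: "sg u = u" "sg v = v" "sg \<alpha> = \<alpha>" "sg \<beta> = \<beta>" and th: "sg \<theta> = - \<theta>"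
  shows "psi ((u + v * \<theta>) ^ (3 ^ m + 2) - (\<alpha> + \<beta> * \<theta>) * (u + v * \<theta>))
         = psi (u * (1 - \<alpha> - \<theta> * \<theta> * v * v)) * psi (- (\<beta> * \<theta> * \<theta> * v))"
proof -
  define x where "x = u + v * \<theta>"
  define a where "a = \<alpha> + \<beta> * \<theta>"
  define y where "y = x ^ (3 ^ m + 2) - a * x"
  have sx: "sg x = u - v * \<theta>" unfolding x_def using K th by (simp add: sg_add sg_mult)
  have sa: "sg a = \<alpha> - \<beta> * \<theta>" unfolding a_def using K th by (simp add: sg_add sg_mult)
  have sp: "sg (x ^ (3 ^ m + 2)) = (sg x) ^ (3 ^ m + 2)" by (rule sg_pow)
  have "sg y = (sg x) ^ (3 ^ m + 2) - sg a * sg x" unfolding y_def by (simp only: sg_diff sg_mult sp)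
  also have "(sg x) ^ (3 ^ m + 2) = sg (sg x) * (sg x) ^ 2" by (rule power_add)
  also have "sg (sg x) = x" by (rule sg_sg)
  finally have sy: "sg y = x * (sg x)^2 - sg a * sg x" .
  have xy: "x ^ (3 ^ m + 2) = sg x * x ^ 2" by (rule power_add)
  define T where "T = u ^ 3 + (u * (1 - \<alpha> - \<theta> * \<theta> * v * v) - u) + (- (\<beta> * \<theta> * \<theta> * v))"
  have "- (y + sg y) - T = 3 * (- (u ^ 3) + u * v ^ 2 * \<theta> ^ 2 + \<alpha> * u + \<beta> * v * \<theta> ^ 2)"
    unfolding sy unfolding y_def xy sx sa T_def unfolding x_def a_def by algebra
  hence yT: "- (y + sg y) = T" using three0 by simp
  have "tr (- (y + sg y)) = - (tr y + tr y)" by (simp only: abs_trace3_neg abs_trace3_add tr_sg)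
  also have "\<dots> = tr y - 3 * tr y" by algebra
  also have "\<dots> = tr y" using three0 by simp
  finally have "tr y = tr T" using yT by simp
  also have "tr T = tr (u * (1 - \<alpha> - \<theta> * \<theta> * v * v)) + tr (- (\<beta> * \<theta> * \<theta> * v))"
    unfolding T_def by (simp add: abs_trace3_add abs_trace3_diff tr_pow3 abs_trace3_neg)
  also have "\<dots> = tr (u * (1 - \<alpha> - \<theta> * \<theta> * v * v) + - (\<beta> * \<theta> * \<theta> * v))"
    by (rule abs_trace3_add[symmetric])
  finally have "psi y = psi (u * (1 - \<alpha> - \<theta> * \<theta> * v * v) + - (\<beta> * \<theta> * \<theta> * v))"
    unfolding psi_def by simp
  thus ?thesis unfolding y_def x_def a_def by (simp only: psi_add)
qed

lemma powN_inj:
  assumes e: "(x::'a) ^ (3 ^ m + 2) = y ^ (3 ^ m + 2)"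
  shows "x = y"
proof (cases "y = 0")
  case True
  thus ?thesis using e by simp
next
  case False
  define z where "z = x / y"
  have zN: "z ^ (3 ^ m + 2) = 1" unfolding z_def using e False by (simp add: power_divide)
  have z0: "z \<noteq> 0"
  proof
    assume "z = 0"
    hence "z ^ (3 ^ m + 2) = 0" by simp
    thus False using zN by simp
  qed
  define w where "w = sg z"
  have w0: "w \<noteq> 0" unfolding w_def using z0 by simp
  have "z ^ (3 ^ m + 2) = w * z ^ 2" unfolding w_def by (rule power_add)
  hence h1: "w * z ^ 2 = 1" using zN by simp
  have sp: "sg (z ^ 2) = w ^ 2" unfolding w_def by (rule sg_pow)
  have "sg (w * z ^ 2) = sg w * sg (z ^ 2)" by (rule sg_mult)
  also have "sg w = z" unfolding w_def by (rule sg_sg)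
  finally have "sg (w * z ^ 2) = z * w ^ 2" using sp by simp
  hence h2: "z * w ^ 2 = 1" using h1 by simp
  have "w * z * (z - w) = w * z ^ 2 - z * w ^ 2" by algebra
  hence "w * z * (z - w) = 0" using h1 h2 by simp
  hence zw: "z = w" using z0 w0 by simp
  have "z ^ 3 = z * z ^ 2" by algebra
  hence "z ^ 3 = w * z ^ 2" using zw by simp
  hence z3: "z ^ 3 = 1" using h1 by simp
  have "(z - 1) ^ (3 ^ 1) = z ^ (3 ^ 1) - 1 ^ (3 ^ 1)" by (rule frob_diff)
  hence "(z - 1) ^ 3 = 0" using z3 by simp
  hence "z = 1" by simp
  thus ?thesis unfolding z_def using False by simp
qed


lemma final_count:
  fixes S :: complex and v0 \<alpha> \<beta> \<theta> :: 'a
  assumes th: "\<theta> \<noteq> 0" "sg \<theta> = - \<theta>" and ab: "sg \<alpha> = \<alpha>" "sg \<beta> = \<beta>"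
  shows "(\<Sum>v\<in>{v::'a. sg v = v \<and> 1 - \<alpha> - \<theta> * \<theta> * v * v = 0}. psi (- (\<beta> * \<theta> * \<theta> * v)))
           \<in> {-1, 0, 1, 2}"
proof -
  define Z where "Z = {v::'a. sg v = v \<and> 1 - \<alpha> - \<theta> * \<theta> * v * v = 0}"
  define e where "e v = psi (- (\<beta> * \<theta> * \<theta> * v))" for v
  have "(\<Sum>v\<in>Z. e v) \<in> {-1, 0, 1, 2}"
  proof (cases "Z = {}")
    case True
    thus ?thesis by simp
  next
    case False
    then obtain v0 where v0: "v0 \<in> Z" by blast
    have Zeq: "Z = {v0, -v0}"
    proof (intro set_eqI iffI)
      fix v assume "v \<in> Z"
      hence cv: "1 - \<alpha> - \<theta> * \<theta> * v * v = 0" unfolding Z_def by blast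
      have cv0: "1 - \<alpha> - \<theta> * \<theta> * v0 * v0 = 0" using v0 unfolding Z_def by blast
      have "(1 - \<alpha> - \<theta> * \<theta> * v * v) - (1 - \<alpha> - \<theta> * \<theta> * v0 * v0) = 0" by (simp only: cv cv0 diff_self)
      moreover have "(1 - \<alpha> - \<theta> * \<theta> * v * v) - (1 - \<alpha> - \<theta> * \<theta> * v0 * v0) = (\<theta> * \<theta>) * ((v0 - v) * (v0 + v))"
        by algebra
      ultimately have "(v0 - v) * (v0 + v) = 0" using th(1) by simp
      hence "v0 - v = 0 \<or> v0 + v = 0" by (simp only: mult_eq_0_iff)
      thus "v \<in> {v0, -v0}"
      proof (elim disjE)
        assume "v0 - v = 0" thus ?thesis by simp
      next
        assume "v0 + v = 0" hence "v = - v0" by (simp only: add_eq_0_iff)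
        thus ?thesis by simp
      qed
    next
      fix v assume "v \<in> {v0, -v0}"
      thus "v \<in> Z" using v0 unfolding Z_def by (auto simp: K_neg)
    qed
    show ?thesis
    proof (cases "v0 = 0")
      case True
      hence "Z = {0}" using Zeq by simp
      thus ?thesis by (simp add: psi0 e_def)
    next
      case False
      have "v0 \<noteq> - v0"
      proof
        assume "v0 = - v0"
        hence "v0 + v0 = 0" by (metis neg_eq_iff_add_eq_0)
        hence "2 * v0 = 0" by (simp only: mult_2)
        thus False using False two_ne0 by simp
      qed
      hence "(\<Sum>v\<in>Z. e v) = e v0 + e (- v0)" using Zeq by simp
      also have "e (- v0) = psi (- (- (\<beta> * \<theta> * \<theta> * v0)))" unfolding e_def by simp
      finally have "(\<Sum>v\<in>Z. e v) = psi (- (\<beta> * \<theta> * \<theta> * v0)) + psi (- (- (\<beta> * \<theta> * \<theta> * v0)))"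
        unfolding e_def by simp
      hence "(\<Sum>v\<in>Z. e v) = 2 \<or> (\<Sum>v\<in>Z. e v) = -1" using psi_pair[of "- (\<beta> * \<theta> * \<theta> * v0)"] by (simp only: minus_minus)
      thus ?thesis by auto
    qed
  qed
  thus ?thesis unfolding Z_def e_def .
qed


lemma main_b1:
  "(\<Sum>x\<in>UNIV. psi ((x::'a) ^ (3 ^ m + 2) - a * x))
     \<in> {- of_nat (3 ^ m), 0, of_nat (3 ^ m), 2 * of_nat (3 ^ m)}"
proof -
  obtain \<theta> :: 'a where th: "\<theta> \<noteq> 0" "sg \<theta> = - \<theta>" using exists_theta by blast
  define K where "K = {u::'a. sg u = u}"
  have bij: "bij_betw (\<lambda>(u,v). u + v * \<theta>) (K \<times> K) UNIV" unfolding K_def by (rule bij_K[OF th])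
  hence "a \<in> (\<lambda>(u,v). u + v * \<theta>) ` (K \<times> K)" unfolding bij_betw_def by simp
  then obtain \<alpha> \<beta> where ab: "\<alpha> \<in> K" "\<beta> \<in> K" "a = \<alpha> + \<beta> * \<theta>" by auto
  define c where "c v = 1 - \<alpha> - \<theta> * \<theta> * v * v" for v
  define e where "e v = psi (- (\<beta> * \<theta> * \<theta> * v))" for v
  have cK: "sg (c v) = c v" if "v \<in> K" for v
    using that ab th unfolding c_def K_def by (simp add: sg_diff sg_mult)
  have "(\<Sum>x\<in>UNIV. psi (x ^ (3 ^ m + 2) - a * x))
      = (\<Sum>p\<in>K \<times> K. psi (((\<lambda>(u,v). u + v * \<theta>) p) ^ (3 ^ m + 2) - a * ((\<lambda>(u,v). u + v * \<theta>) p)))"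
    by (rule sum.reindex_bij_betw[OF bij, symmetric])
  also have "\<dots> = (\<Sum>(u,v)\<in>K \<times> K. psi (u * c v) * e v)"
  proof (rule sum.cong[OF refl], clarify)
    fix u v assume "u \<in> K" "v \<in> K"
    thus "psi ((u + v * \<theta>) ^ (3 ^ m + 2) - a * (u + v * \<theta>)) = psi (u * c v) * e v"
      unfolding ab(3) c_def e_def using ab th unfolding K_def by (intro key_identity) auto
  qed
  also have "\<dots> = (\<Sum>u\<in>K. \<Sum>v\<in>K. psi (u * c v) * e v)"
    by (rule sum.cartesian_product[symmetric])
  also have "\<dots> = (\<Sum>v\<in>K. \<Sum>u\<in>K. psi (u * c v) * e v)"
    by (rule sum.swap)
  also have "\<dots> = (\<Sum>v\<in>K. (\<Sum>u\<in>K. psi (u * c v)) * e v)"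
    by (simp add: sum_distrib_right)
  also have "\<dots> = (\<Sum>v\<in>K. of_nat (3 ^ m) * (if c v = 0 then e v else 0))"
  proof (rule sum.cong[OF refl])
    fix v assume "v \<in> K"
    hence "(\<Sum>u\<in>K. psi (u * c v)) = (if c v = 0 then of_nat (3 ^ m) else 0)"
      unfolding K_def by (intro orth cK[unfolded K_def]) simp
    thus "(\<Sum>u\<in>K. psi (u * c v)) * e v = of_nat (3 ^ m) * (if c v = 0 then e v else 0)" by simp
  qed
  also have "\<dots> = of_nat (3 ^ m) * (\<Sum>v\<in>{v\<in>K. c v = 0}. e v)"
    by (simp add: sum_distrib_left sum.inter_filter)
  also have "{v\<in>K. c v = 0} = {v::'a. sg v = v \<and> 1 - \<alpha> - \<theta> * \<theta> * v * v = 0}"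
    unfolding K_def c_def by simp
  finally have W: "(\<Sum>x\<in>UNIV. psi (x ^ (3 ^ m + 2) - a * x)) = of_nat (3 ^ m) *
      (\<Sum>v\<in>{v::'a. sg v = v \<and> 1 - \<alpha> - \<theta> * \<theta> * v * v = 0}. psi (- (\<beta> * \<theta> * \<theta> * v)))"
    unfolding e_def .
  have "(\<Sum>v\<in>{v::'a. sg v = v \<and> 1 - \<alpha> - \<theta> * \<theta> * v * v = 0}. psi (- (\<beta> * \<theta> * \<theta> * v))) \<in> {-1, 0, 1, 2}"
    using ab th unfolding K_def by (intro final_count) auto
  thus ?thesis unfolding W by auto
qed

lemma walsh_main:
  assumes b: "(b::'a) \<noteq> 0"
  shows "walsh3 (2 * m) (\<lambda>x. x ^ (3 ^ m + 2)) a b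
           \<in> {- of_nat (3 ^ m), 0, of_nat (3 ^ m), 2 * of_nat (3 ^ m)}"
proof -
  have "inj (\<lambda>x::'a. x ^ (3 ^ m + 2))" by (rule injI) (rule powN_inj)
  hence "surj (\<lambda>x::'a. x ^ (3 ^ m + 2))" using finite_UNIV_inj_surj[of "\<lambda>x::'a. x ^ (3 ^ m + 2)"] by simp
  then obtain c :: 'a where c: "c ^ (3 ^ m + 2) = b" by (metis surjD)
  have c0: "c \<noteq> 0" using c b by auto
  have "walsh3 (2 * m) (\<lambda>x. x ^ (3 ^ m + 2)) a b = (\<Sum>x\<in>UNIV. psi (b * x ^ (3 ^ m + 2) - a * x))"
    by (simp add: walsh3_def psi_def)
  also have "\<dots> = (\<Sum>y\<in>UNIV. psi (y ^ (3 ^ m + 2) - (a / c) * y))"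
  proof (rule sum.reindex_bij_witness[of _ "\<lambda>y. y / c" "\<lambda>x. c * x"])
    fix x :: 'a
    show "psi ((c * x) ^ (3 ^ m + 2) - a / c * (c * x)) = psi (b * x ^ (3 ^ m + 2) - a * x)"
    proof -
      have h1: "(c * x) ^ (3 ^ m + 2) = c ^ (3 ^ m + 2) * x ^ (3 ^ m + 2)" by (rule power_mult_distrib)
      have h2: "a / c * (c * x) = a * x" using c0 by simp
      show ?thesis by (simp only: h1 h2 c)
    qed
  qed (use c0 in auto)
  finally show ?thesis using main_b1[of "a / c"] by simp
qed


end

theorem proposition10:
  fixes m :: nat and a b :: "'a::{field,finite}"
  assumes "m \<ge> 1"
    and "CARD('a) = 3 ^ (2 * m)"
    and "b \<noteq> 0"
  shows "walsh3 (2 * m) (\<lambda>x. x ^ (3 ^ m + 2)) a b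
           \<in> {- of_nat (3 ^ m), 0, of_nat (3 ^ m), 2 * of_nat (3 ^ m)}"
  by (rule walsh_main[OF assms(2) assms(1) assms(3)])

end
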